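(* In the reduction instance $NTP([a_j]_{j\in A},W)$, every optimal schedule $S^*$ satisfies $B(S^* )\ge W$.
   Context: Reduction instance. Let $N\ge1$, $A=\{1,\dots,N\}$, positive integers $a_1,\dots,a_N$, positive integer $W\le\sum_{j\in A}a_j$. Set $M=N+\sum_{j\in A}a_j+1$, employees $\mathcal E=\{1,\dots,M\}$ (smaller index = more senior). For $k\in A$: $i_k=k+\sum_{j=1}^{k-1}a_j$ (critical employees), $\mathcal E^S_k=\{i: i_k<i\le i_k+a_k\}$ (stable block). Response delays: $r_{i_k}=\sum_{j=1}^{k}a_j$; for $i\in\mathcal E^S_k$, $r_i=\sum_{j=1}^{k-1}a_j$; $r_M=\sum_{j\in A}a_j$. Let $C^*_0=2\sum_j a_j$ and $H=C^*_0-W$. A schedule $S=(s_i,e_i)_{i\in\mathcal E}$ has $s_i\ge0$, $e_i=s_i+r_i$; it is feasible if $s_1\le\dots\le s_M$ and $e_i\le H$ for all $i$. $b_i=|\{j: i<j,\ e_j<e_i\}|$, $B(S)=\sum_i b_i$. A schedule is optimal if it is feasible and minimizes $B(S)$ among feasible schedules. *)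

theory Defs
  imports Complex_Main
begin

definition end_time :: "(nat \<Rightarrow> nat) \<Rightarrow> (nat \<Rightarrow> real) \<Rightarrow> nat \<Rightarrow> real" where
  "end_time r s i = s i + real (r i)"

definition feasible :: "nat \<Rightarrow> (nat \<Rightarrow> nat) \<Rightarrow> real \<Rightarrow> (nat \<Rightarrow> real) \<Rightarrow> bool" where
  "feasible M r H s \<longleftrightarrow>
     (\<forall>i\<in>{1..M}. s i \<ge> 0) \<and>
     (\<forall>i\<in>{1..M}. \<forall>j\<in>{1..M}. i \<le> j \<longrightarrow> s i \<le> s j) \<and>
     (\<forall>i\<in>{1..M}. end_time r s i \<le> H)"

definition blocking :: "nat \<Rightarrow> (nat \<Rightarrow> nat) \<Rightarrow> (nat \<Rightarrow> real) \<Rightarrow> nat \<Rightarrow> nat" where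
  "blocking M r s i = card {j\<in>{1..M}. i < j \<and> end_time r s j < end_time r s i}"

definition total_blocking :: "nat \<Rightarrow> (nat \<Rightarrow> nat) \<Rightarrow> (nat \<Rightarrow> real) \<Rightarrow> nat" where
  "total_blocking M r s = (\<Sum>i\<in>{1..M}. blocking M r s i)"

definition optimal :: "nat \<Rightarrow> (nat \<Rightarrow> nat) \<Rightarrow> real \<Rightarrow> (nat \<Rightarrow> real) \<Rightarrow> bool" where
  "optimal M r H s \<longleftrightarrow> feasible M r H s \<and>
     (\<forall>s'. feasible M r H s' \<longrightarrow> total_blocking M r s \<le> total_blocking M r s')"

definition crit :: "(nat \<Rightarrow> nat) \<Rightarrow> nat \<Rightarrow> nat" where
  "crit a k = k + (\<Sum>j\<in>{1..<k}. a j)"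

end

theory Submission
  imports Defs
begin

lemma crit_Suc: "k \<ge> 1 \<Longrightarrow> crit a (Suc k) = crit a k + a k + 1"
  unfolding crit_def by (simp add: sum.atLeastLessThan_Suc)

lemma crit_end: "k \<ge> 1 \<Longrightarrow> crit a k + a k = k + (\<Sum>j\<in>{1..k}. a j)"
proof -
  assume k: "k \<ge> 1"
  have "(\<Sum>j\<in>{1..k}. a j) = (\<Sum>j\<in>{1..<Suc k}. a j)"
    by (simp add: atLeastLessThanSuc_atLeastAtMost)
  also have "\<dots> = (\<Sum>j\<in>{1..<k}. a j) + a k" using k by (simp add: sum.atLeastLessThan_Suc)
  finally show ?thesis unfolding crit_def by simp
qed

lemma crit_one: "crit a 1 = 1" unfolding crit_def by simp

lemma crit_mono: "1 \<le> k \<Longrightarrow> k < l \<Longrightarrow> crit a k < crit a l"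
proof (induction l rule: nat_induct)
  case 0 then show ?case by simp
next
  case (Suc l)
  then have "k \<le> l" by simp
  then show ?case using Suc crit_Suc[of l a]
    by (cases "k = l") auto
qed

lemma telescope:
  fixes s :: "nat \<Rightarrow> real"
  assumes mono: "\<forall>i j. 1 \<le> i \<longrightarrow> i \<le> j \<longrightarrow> j \<le> M \<longrightarrow> s i \<le> s j"
  shows "1 \<le> n \<Longrightarrow> crit a n + a n \<le> M \<Longrightarrow>
    (\<Sum>k\<in>{1..n}. s (crit a k + a k) - s (crit a k)) \<le> s (crit a n + a n) - s 1"
proof (induction n rule: nat_induct)
  case 0 then show ?case by simp
next
  case (Suc n)
  show ?case
  proof (cases "n = 0")
    case True then show ?thesis by (simp add: crit_def)
  next
    case False
    then have n1: "1 \<le> n" by simp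
    have cs: "crit a (Suc n) = crit a n + a n + 1" using crit_Suc[OF n1] .
    have le: "crit a n + a n \<le> M" using Suc.prems cs by simp
    have IH: "(\<Sum>k\<in>{1..n}. s (crit a k + a k) - s (crit a k)) \<le> s (crit a n + a n) - s 1"
      using Suc.IH n1 le by simp
    have "s (crit a n + a n) \<le> s (crit a (Suc n))"
    proof -
      have "1 \<le> crit a n + a n" using n1 unfolding crit_def by simp
      moreover have "crit a (Suc n) \<le> M" using Suc.prems(2) by simp
      ultimately show ?thesis using mono cs by simp
    qed
    then show ?thesis using IH by (simp add: sum.cl_ivl_Suc)
  qed
qed

lemma block:
  fixes s :: "nat \<Rightarrow> real"
  assumes k1: "1 \<le> k"
    and hr1: "r (crit a k) = (\<Sum>j\<in>{1..k}. a j)"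
    and hr2: "\<forall>i. crit a k < i \<and> i \<le> crit a k + a k \<longrightarrow> r i = (\<Sum>j\<in>{1..<k}. a j)"
    and hM: "crit a k + a k \<le> M"
    and mono: "\<forall>i j. 1 \<le> i \<longrightarrow> i \<le> j \<longrightarrow> j \<le> M \<longrightarrow> s i \<le> s j"
  shows "real (a k) \<le> real (blocking M r s (crit a k)) + (s (crit a k + a k) - s (crit a k))"
proof (cases "real (a k) \<le> s (crit a k + a k) - s (crit a k)")
  case True
  then show ?thesis by simp
next
  case False
  let ?b = "crit a k"
  have b1: "1 \<le> ?b" using k1 unfolding crit_def by simp
  have sumk: "(\<Sum>j\<in>{1..k}. a j) = (\<Sum>j\<in>{1..<k}. a j) + a k"
    using crit_end[OF k1, of a] unfolding crit_def by simp
  have sub: "{?b<..?b + a k} \<subseteq> {j\<in>{1..M}. ?b < j \<and> end_time r s j < end_time r s ?b}"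
  proof
    fix j assume j: "j \<in> {?b<..?b + a k}"
    have "s j \<le> s (?b + a k)" using mono j b1 hM by auto
    moreover have "r j = (\<Sum>j\<in>{1..<k}. a j)" using hr2 j by auto
    ultimately have "end_time r s j < end_time r s ?b"
      using False hr1 sumk unfolding end_time_def by simp
    then show "j \<in> {j\<in>{1..M}. ?b < j \<and> end_time r s j < end_time r s ?b}"
      using j hM b1 by auto
  qed
  have "a k \<le> blocking M r s ?b"
    unfolding blocking_def using card_mono[OF _ sub] by simp
  moreover have "s ?b \<le> s (?b + a k)" using mono b1 hM by auto
  ultimately show ?thesis by simp
qed

theorem corollary4:
  fixes N W :: nat and a r :: "nat \<Rightarrow> nat" and s :: "nat \<Rightarrow> real"
  assumes "N \<ge> 1"
    and "\<forall>j\<in>{1..N}. a j > 0"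
    and "W > 0" and "W \<le> (\<Sum>j\<in>{1..N}. a j)"
    and "\<forall>k\<in>{1..N}. r (crit a k) = (\<Sum>j\<in>{1..k}. a j)"
    and "\<forall>k\<in>{1..N}. \<forall>i. crit a k < i \<and> i \<le> crit a k + a k \<longrightarrow>
            r i = (\<Sum>j\<in>{1..<k}. a j)"
    and "r (N + (\<Sum>j\<in>{1..N}. a j) + 1) = (\<Sum>j\<in>{1..N}. a j)"
    and "optimal (N + (\<Sum>j\<in>{1..N}. a j) + 1) r
           (real (2 * (\<Sum>j\<in>{1..N}. a j)) - real W) s"
  shows "total_blocking (N + (\<Sum>j\<in>{1..N}. a j) + 1) r s \<ge> W"
proof -
  define T where "T = (\<Sum>j\<in>{1..N}. a j)"
  define M where "M = N + T + 1"
  have feas: "feasible M r (real (2 * T) - real W) s"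
    using assms(8) unfolding optimal_def M_def T_def by simp
  have s1: "s 1 \<ge> 0" using feas unfolding feasible_def M_def by simp
  have mono: "\<forall>i j. 1 \<le> i \<longrightarrow> i \<le> j \<longrightarrow> j \<le> M \<longrightarrow> s i \<le> s j"
    using feas unfolding feasible_def by auto
  have "end_time r s M \<le> real (2 * T) - real W"
    using feas unfolding feasible_def M_def by simp
  then have sM: "s M \<le> real T - real W"
    using assms(7) unfolding end_time_def M_def T_def by simp
  have ck: "crit a k + a k \<le> N + T" if "k \<in> {1..N}" for k
  proof -
    have "(\<Sum>j\<in>{1..k}. a j) \<le> T" unfolding T_def
      by (rule sum_mono2) (use that in auto)
    then show ?thesis using crit_end[of k a] that by simp
  qed
  have blk: "real (a k) \<le> real (blocking M r s (crit a k)) + (s (crit a k + a k) - s (crit a k))"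
    if "k \<in> {1..N}" for k
    using block[of k r a M s] that assms(5,6) ck[OF that] mono unfolding M_def by auto
  have "real T = (\<Sum>k\<in>{1..N}. real (a k))" unfolding T_def by simp
  also have "\<dots> \<le> (\<Sum>k\<in>{1..N}. real (blocking M r s (crit a k)) + (s (crit a k + a k) - s (crit a k)))"
    by (rule sum_mono) (rule blk)
  also have "\<dots> = (\<Sum>k\<in>{1..N}. real (blocking M r s (crit a k))) + (\<Sum>k\<in>{1..N}. s (crit a k + a k) - s (crit a k))"
    by (rule sum.distrib)
  also have "(\<Sum>k\<in>{1..N}. s (crit a k + a k) - s (crit a k)) \<le> s (crit a N + a N) - s 1"
    using telescope[OF mono, of N a] assms(1) ck[of N] unfolding M_def by auto
  also have "s (crit a N + a N) \<le> s M"
    using mono ck[of N] assms(1) crit_end[of N a] unfolding M_def by auto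
  finally have A: "real T \<le> real (\<Sum>k\<in>{1..N}. blocking M r s (crit a k)) + (real T - real W)"
    using s1 sM by simp
  have inj: "inj_on (crit a) {1..N}"
    by (rule inj_onI) (metis atLeastAtMost_iff crit_mono linorder_neqE_nat less_irrefl)
  have "(\<Sum>k\<in>{1..N}. blocking M r s (crit a k)) = (\<Sum>i\<in>crit a ` {1..N}. blocking M r s i)"
    using sum.reindex[OF inj, of "blocking M r s"] by (simp add: comp_def)
  also have "\<dots> \<le> (\<Sum>i\<in>{1..M}. blocking M r s i)"
  proof (rule sum_mono2)
    show "crit a ` {1..N} \<subseteq> {1..M}"
    proof
      fix x assume "x \<in> crit a ` {1..N}"
      then obtain k where k: "k \<in> {1..N}" "x = crit a k" by auto
      then have "1 \<le> x" unfolding crit_def by simp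
      moreover have "x \<le> M" using ck[OF k(1)] k unfolding M_def by simp
      ultimately show "x \<in> {1..M}" by simp
    qed
  qed auto
  finally have "(\<Sum>k\<in>{1..N}. blocking M r s (crit a k)) \<le> total_blocking M r s"
    unfolding total_blocking_def .
  moreover have "W \<le> (\<Sum>k\<in>{1..N}. blocking M r s (crit a k))"
  proof -
    have "real W \<le> real (\<Sum>k\<in>{1..N}. blocking M r s (crit a k))" using A by linarith
    then show ?thesis by (simp only: of_nat_le_iff)
  qed
  ultimately show ?thesis unfolding M_def T_def by simp
qed

end
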